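(* Let $\phi:[0,1]\to[0,1]$ be a measure-preserving map, $\mathcal H=L^2([0,1])$, $\Phi_\phi:\mathcal H\to\mathcal H$, $\Phi_\phi(f)=f\circ\phi$, and let $B$ be a bounded linear operator on $\mathcal H$. Then there is a unique bounded linear operator $B^\phi$ on $\mathcal H$ such that $B^\phi(f\circ\phi)=(Bf)\circ\phi$ for all $f\in\mathcal H$ and $B^\phi=0$ on $\Phi_\phi(\mathcal H)^\perp$. *)

theory Defs
  imports "HOL-Analysis.Analysis"
begin

abbreviation I01 :: "real measure" where
  "I01 \<equiv> lebesgue_on {0..1}"

definition meas_pres :: "(real \<Rightarrow> real) \<Rightarrow> bool" where
  "meas_pres \<phi> \<longleftrightarrow> \<phi> \<in> measurable I01 I01 \<and> distr I01 I01 \<phi> = I01"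

text \<open>Representatives of elements of H = L^2([0,1]) (complex-valued);
  elements of H are classes modulo a.e. equality.\<close>
definition L2 :: "(real \<Rightarrow> complex) \<Rightarrow> bool" where
  "L2 f \<longleftrightarrow> f \<in> borel_measurable I01 \<and> integrable I01 (\<lambda>x. (norm (f x))\<^sup>2)"

definition ae_eq :: "(real \<Rightarrow> complex) \<Rightarrow> (real \<Rightarrow> complex) \<Rightarrow> bool" where
  "ae_eq f g \<longleftrightarrow> (AE x in I01. f x = g x)"

definition L2_inner :: "(real \<Rightarrow> complex) \<Rightarrow> (real \<Rightarrow> complex) \<Rightarrow> complex" where
  "L2_inner f g = (LINT x|I01. f x * cnj (g x))"

definition L2_norm :: "(real \<Rightarrow> complex) \<Rightarrow> real" where
  "L2_norm f = sqrt (LINT x|I01. (norm (f x))\<^sup>2)"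

definition bounded_op :: "((real \<Rightarrow> complex) \<Rightarrow> (real \<Rightarrow> complex)) \<Rightarrow> bool" where
  "bounded_op B \<longleftrightarrow>
     (\<forall>f. L2 f \<longrightarrow> L2 (B f)) \<and>
     (\<forall>f g. L2 f \<longrightarrow> L2 g \<longrightarrow> ae_eq f g \<longrightarrow> ae_eq (B f) (B g)) \<and>
     (\<forall>f g a b. L2 f \<longrightarrow> L2 g \<longrightarrow>
        ae_eq (B (\<lambda>x. a * f x + b * g x)) (\<lambda>x. a * B f x + b * B g x)) \<and>
     (\<exists>C. \<forall>f. L2 f \<longrightarrow> L2_norm (B f) \<le> C * L2_norm f)"

definition koopman_perp :: "(real \<Rightarrow> real) \<Rightarrow> (real \<Rightarrow> complex) set" where
  "koopman_perp \<phi> = {g. L2 g \<and> (\<forall>f. L2 f \<longrightarrow> L2_inner (f \<circ> \<phi>) g = 0)}"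

definition lifted_op ::
  "(real \<Rightarrow> real) \<Rightarrow> ((real \<Rightarrow> complex) \<Rightarrow> (real \<Rightarrow> complex)) \<Rightarrow>
   ((real \<Rightarrow> complex) \<Rightarrow> (real \<Rightarrow> complex)) \<Rightarrow> bool" where
  "lifted_op \<phi> B B' \<longleftrightarrow> bounded_op B' \<and>
     (\<forall>f. L2 f \<longrightarrow> ae_eq (B' (f \<circ> \<phi>)) (B f \<circ> \<phi>)) \<and>
     (\<forall>g \<in> koopman_perp \<phi>. ae_eq (B' g) (\<lambda>x. 0))"

end

theory Submission
  imports Defs "HOL-Probability.Conditional_Expectation"
begin


lemma doob_dynkin_nonneg:
  fixes u :: "'a \<Rightarrow> real"
  assumes phi: "\<phi> \<in> X \<rightarrow> space N"
    and u: "u \<in> borel_measurable (vimage_algebra X \<phi> N)" "\<And>x. 0 \<le> u x"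
  shows "\<exists>h \<in> borel_measurable N. \<forall>x\<in>X. u x = h (\<phi> x)"
  using u
proof (induction rule: borel_measurable_induct_real)
  case (set A)
  then obtain B where B: "B \<in> sets N" "A = \<phi> -` B \<inter> X"
    using sets_vimage_algebra2[OF phi] by auto
  show ?case
    by (rule bexI[of _ "indicator B"]) (auto simp: B indicator_def intro: borel_measurable_indicator)
next
  case (mult u c)
  then obtain h where h: "h \<in> borel_measurable N" "\<forall>x\<in>X. u x = h (\<phi> x)" by blast
  show ?case by (rule bexI[of _ "\<lambda>y. c * h y"]) (use h in auto)
next
  case (add u v)
  then obtain h where h: "h \<in> borel_measurable N" "\<forall>x\<in>X. u x = h (\<phi> x)" by blast
  from add obtain g where g: "g \<in> borel_measurable N" "\<forall>x\<in>X. v x = g (\<phi> x)" by blast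
  show ?case by (rule bexI[of _ "\<lambda>y. g y + h y"]) (use h g in auto)
next
  case (seq U)
  from seq have "\<forall>i. \<exists>h \<in> borel_measurable N. \<forall>x\<in>X. U i x = h (\<phi> x)" by blast
  then obtain H where H: "\<And>i. H i \<in> borel_measurable N" "\<And>i x. x \<in> X \<Longrightarrow> U i x = H i (\<phi> x)"
    by metis
  show ?case
  proof (rule bexI[of _ "\<lambda>y. lim (\<lambda>i. H i y)"])
    show "(\<lambda>y. lim (\<lambda>i. H i y)) \<in> borel_measurable N" using H(1) by measurable
    show "\<forall>x\<in>X. u x = lim (\<lambda>i. H i (\<phi> x))"
    proof
      fix x assume x: "x \<in> X"
      have l: "(\<lambda>i. U i x) \<longlonglongrightarrow> u x" using seq(4)[of x] x by simp
      have "(\<lambda>i. H i (\<phi> x)) = (\<lambda>i. U i x)" using H(2)[OF x] by simp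
      with l have "(\<lambda>i. H i (\<phi> x)) \<longlonglongrightarrow> u x" by simp
      then show "u x = lim (\<lambda>i. H i (\<phi> x))" by (simp add: limI)
    qed
  qed
qed

lemma doob_dynkin:
  fixes u :: "'a \<Rightarrow> real"
  assumes phi: "\<phi> \<in> X \<rightarrow> space N"
    and u: "u \<in> borel_measurable (vimage_algebra X \<phi> N)"
  shows "\<exists>h \<in> borel_measurable N. \<forall>x\<in>X. u x = h (\<phi> x)"
proof -
  have m1: "(\<lambda>x. max (u x) 0) \<in> borel_measurable (vimage_algebra X \<phi> N)" using u by measurable
  have m2: "(\<lambda>x. max (- u x) 0) \<in> borel_measurable (vimage_algebra X \<phi> N)" using u by measurable
  obtain h1 where h1: "h1 \<in> borel_measurable N" "\<forall>x\<in>X. max (u x) 0 = h1 (\<phi> x)"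
    using doob_dynkin_nonneg[OF phi m1] by auto
  obtain h2 where h2: "h2 \<in> borel_measurable N" "\<forall>x\<in>X. max (- u x) 0 = h2 (\<phi> x)"
    using doob_dynkin_nonneg[OF phi m2] by auto
  have "\<forall>x\<in>X. u x = h1 (\<phi> x) - h2 (\<phi> x)"
  proof
    fix x assume x: "x \<in> X"
    have "u x = max (u x) 0 - max (- u x) 0" by (simp add: max_def)
    then show "u x = h1 (\<phi> x) - h2 (\<phi> x)" using h1(2) h2(2) x by simp
  qed
  moreover have "(\<lambda>y. h1 y - h2 y) \<in> borel_measurable N" using h1(1) h2(1) by measurable
  ultimately show ?thesis by (intro bexI[where x="\<lambda>y. h1 y - h2 y"]) auto
qed



lemma space_I01[simp]: "space I01 = {0..1}" by simp

lemma fin_I01: "finite_measure I01"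
  by (rule finite_measure_lebesgue_on) simp

lemma ab_le: fixes a b :: real assumes "0\<le>a" "0\<le>b" shows "a*b \<le> a^2 + b^2"
proof -
  have "0 \<le> (a-b)^2" by simp
  hence "2*a*b \<le> a^2+b^2" by (simp add: power2_diff)
  moreover have "0 \<le> a*b" using assms by simp
  ultimately show ?thesis by linarith
qed

lemma ab_le2: fixes a b :: real shows "(a+b)^2 \<le> 2*a^2 + 2*b^2"
proof -
  have "0 \<le> (a-b)^2" by simp
  thus ?thesis by (simp add: power2_diff power2_sum)
qed

lemma meas_cnj[measurable]: "g \<in> borel_measurable M \<Longrightarrow> (\<lambda>x. cnj (g x)) \<in> borel_measurable M"
  by (rule borel_measurable_continuous_on[where f=cnj]) (auto intro: continuous_on_cnj continuous_on_id)

lemma L2_meas: "L2 f \<Longrightarrow> f \<in> borel_measurable I01" by (simp add: L2_def)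
lemma L2_sq: "L2 f \<Longrightarrow> integrable I01 (\<lambda>x. (norm (f x))\<^sup>2)" by (simp add: L2_def)

lemma bound_prod:
  fixes s :: "real \<Rightarrow> 'b::{banach, second_countable_topology}"
  assumes "L2 p" "L2 q" "s \<in> borel_measurable I01" "\<And>x. norm (s x) \<le> norm (p x) * norm (q x)"
  shows "integrable I01 s"
proof (rule Bochner_Integration.integrable_bound[OF _ assms(3)])
  show "integrable I01 (\<lambda>x. (norm (p x))\<^sup>2 + (norm (q x))\<^sup>2)"
    using L2_sq[OF assms(1)] L2_sq[OF assms(2)] by simp
  show "AE x in I01. norm (s x) \<le> norm ((norm (p x))\<^sup>2 + (norm (q x))\<^sup>2)"
  proof
    fix x
    have "norm (s x) \<le> (norm (p x))\<^sup>2 + (norm (q x))\<^sup>2"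
      using assms(4)[of x] ab_le[of "norm (p x)" "norm (q x)"] by simp
    thus "norm (s x) \<le> norm ((norm (p x))\<^sup>2 + (norm (q x))\<^sup>2)" by simp
  qed
qed

lemma L2_integrable: assumes "L2 f" shows "integrable I01 f"
proof (rule Bochner_Integration.integrable_bound[OF _ L2_meas[OF assms]])
  show "integrable I01 (\<lambda>x. 1 + (norm (f x))\<^sup>2)"
    using L2_sq[OF assms] finite_measure.integrable_const[OF fin_I01] by simp
  show "AE x in I01. norm (f x) \<le> norm (1 + (norm (f x))\<^sup>2)"
  proof
    fix x
    have "norm (f x) \<le> 1 + (norm (f x))\<^sup>2"
      using ab_le[of "norm (f x)" 1] by simp
    thus "norm (f x) \<le> norm (1 + (norm (f x))\<^sup>2)" by simp
  qed
qed

lemma L2_inner_integrable: "L2 f \<Longrightarrow> L2 g \<Longrightarrow> integrable I01 (\<lambda>x. f x * cnj (g x))"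
proof (rule bound_prod[of f g])
  assume a: "L2 f" "L2 g"
  show "(\<lambda>x. f x * cnj (g x)) \<in> borel_measurable I01" using L2_meas[OF a(1)] L2_meas[OF a(2)] by measurable
qed (auto simp: norm_mult)

lemma L2_zero: "L2 (\<lambda>x. 0)" by (simp add: L2_def)

lemma L2_lin:
  assumes "L2 f" "L2 g"
  shows "L2 (\<lambda>x. a * f x + b * g x)"
  unfolding L2_def
proof
  show "(\<lambda>x. a * f x + b * g x) \<in> borel_measurable I01"
    using L2_meas[OF assms(1)] L2_meas[OF assms(2)] by measurable
  show "integrable I01 (\<lambda>x. (norm (a * f x + b * g x))\<^sup>2)"
  proof (rule Bochner_Integration.integrable_bound)
    show "integrable I01 (\<lambda>x. 2 * (norm a)\<^sup>2 * (norm (f x))\<^sup>2 + 2 * (norm b)\<^sup>2 * (norm (g x))\<^sup>2)"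
      using L2_sq[OF assms(1)] L2_sq[OF assms(2)] by simp
    show "(\<lambda>x. (norm (a * f x + b * g x))\<^sup>2) \<in> borel_measurable I01"
      using L2_meas[OF assms(1)] L2_meas[OF assms(2)] by measurable
    show "AE x in I01. norm ((norm (a * f x + b * g x))\<^sup>2) \<le> norm (2 * (norm a)\<^sup>2 * (norm (f x))\<^sup>2 + 2 * (norm b)\<^sup>2 * (norm (g x))\<^sup>2)"
    proof
      fix x
      have t: "norm (a * f x + b * g x) \<le> norm a * norm (f x) + norm b * norm (g x)"
        by (metis norm_mult norm_triangle_ineq)
      have "(norm (a * f x + b * g x))\<^sup>2 \<le> (norm a * norm (f x) + norm b * norm (g x))\<^sup>2"
        by (rule power_mono[OF t]) simp
      also have "\<dots> \<le> 2 * (norm a * norm (f x))\<^sup>2 + 2 * (norm b * norm (g x))\<^sup>2" by (rule ab_le2)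
      finally show "norm ((norm (a * f x + b * g x))\<^sup>2) \<le> norm (2 * (norm a)\<^sup>2 * (norm (f x))\<^sup>2 + 2 * (norm b)\<^sup>2 * (norm (g x))\<^sup>2)"
        by (simp add: power_mult_distrib)
    qed
  qed
qed

lemma L2_diff: assumes "L2 f" "L2 g" shows "L2 (\<lambda>x. f x - g x)"
  using L2_lin[OF assms, of 1 "-1"] by simp

context
  fixes \<phi> :: "real \<Rightarrow> real"
  assumes mp: "meas_pres \<phi>"
begin

lemma mp_meas: "\<phi> \<in> measurable I01 I01" using mp by (simp add: meas_pres_def)
lemma mp_distr: "distr I01 I01 \<phi> = I01" using mp by (simp add: meas_pres_def)

lemma int_comp:
  fixes u :: "real \<Rightarrow> 'b::{banach, second_countable_topology}"
  assumes "u \<in> borel_measurable I01"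
  shows "integral\<^sup>L I01 (\<lambda>x. u (\<phi> x)) = integral\<^sup>L I01 u"
  using integral_distr[OF mp_meas assms] mp_distr by simp

lemma integrable_comp:
  fixes u :: "real \<Rightarrow> 'b::{banach, second_countable_topology}"
  assumes "u \<in> borel_measurable I01"
  shows "integrable I01 (\<lambda>x. u (\<phi> x)) \<longleftrightarrow> integrable I01 u"
  using integrable_distr_eq[OF mp_meas assms] mp_distr by simp

lemma L2_comp: assumes "L2 f" shows "L2 (f \<circ> \<phi>)"
  unfolding L2_def
proof
  show "f \<circ> \<phi> \<in> borel_measurable I01"
    using measurable_comp[OF mp_meas L2_meas[OF assms]] .
  have m: "(\<lambda>y. (norm (f y))\<^sup>2) \<in> borel_measurable I01" using L2_meas[OF assms] by measurable
  show "integrable I01 (\<lambda>x. (norm ((f \<circ> \<phi>) x))\<^sup>2)"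
    using integrable_comp[OF m] L2_sq[OF assms] by simp
qed

lemma L2_norm_comp: assumes "L2 f" shows "L2_norm (f \<circ> \<phi>) = L2_norm f"
proof -
  have m: "(\<lambda>y. (norm (f y))\<^sup>2) \<in> borel_measurable I01" using L2_meas[OF assms] by measurable
  show ?thesis using int_comp[OF m] by (simp add: L2_norm_def)
qed

lemma ae_comp:
  assumes "f \<in> borel_measurable I01" "g \<in> borel_measurable I01"
  shows "ae_eq (f \<circ> \<phi>) (g \<circ> \<phi>) \<longleftrightarrow> ae_eq f g"
proof -
  have s: "{x \<in> space I01. f x = g x} \<in> sets I01" using assms by measurable
  show ?thesis
    using AE_distr_iff[OF mp_meas s, unfolded mp_distr] by (simp add: ae_eq_def comp_def)
qed

end



lemma inner_lin2:
  assumes "L2 f" "L2 g1" "L2 g2"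
  shows "L2_inner f (\<lambda>x. a * g1 x + b * g2 x) = cnj a * L2_inner f g1 + cnj b * L2_inner f g2"
proof -
  have i1: "integrable I01 (\<lambda>x. f x * cnj (g1 x))" using L2_inner_integrable assms by blast
  have i2: "integrable I01 (\<lambda>x. f x * cnj (g2 x))" using L2_inner_integrable assms by blast
  have "(\<lambda>x. f x * cnj (a * g1 x + b * g2 x)) = (\<lambda>x. cnj a * (f x * cnj (g1 x)) + cnj b * (f x * cnj (g2 x)))"
    by (simp add: algebra_simps)
  then have "L2_inner f (\<lambda>x. a * g1 x + b * g2 x) = (LINT x|I01. cnj a * (f x * cnj (g1 x)) + cnj b * (f x * cnj (g2 x)))"
    by (simp add: L2_inner_def)
  also have "\<dots> = (LINT x|I01. cnj a * (f x * cnj (g1 x))) + (LINT x|I01. cnj b * (f x * cnj (g2 x)))"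
  proof (rule Bochner_Integration.integral_add)
    show "integrable I01 (\<lambda>x. cnj a * (f x * cnj (g1 x)))" using i1 by (rule integrable_mult_right)
    show "integrable I01 (\<lambda>x. cnj b * (f x * cnj (g2 x)))" using i2 by (rule integrable_mult_right)
  qed
  also have "\<dots> = cnj a * L2_inner f g1 + cnj b * L2_inner f g2"
    by (simp add: L2_inner_def)
  finally show ?thesis .
qed

lemma inner_self: "L2_inner f f = complex_of_real (LINT x|I01. (norm (f x))\<^sup>2)"
proof -
  have "L2_inner f f = (CLINT x|I01. complex_of_real ((norm (f x))\<^sup>2))"
    unfolding L2_inner_def by (intro Bochner_Integration.integral_cong refl) (rule complex_norm_square[symmetric])
  also have "\<dots> = complex_of_real (LINT x|I01. (norm (f x))\<^sup>2)" by (rule integral_complex_of_real)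
  finally show ?thesis .
qed

lemma pyth:
  assumes g: "L2 g" and u: "L2 u" and o: "L2_inner u (\<lambda>x. g x - u x) = 0"
  shows "L2_norm u \<le> L2_norm g"
proof -
  define w where "w = (\<lambda>x. g x - u x)"
  have w: "L2 w" unfolding w_def using L2_diff[OF g u] .
  have pt: "(norm (g x))\<^sup>2 = (norm (u x))\<^sup>2 + (norm (w x))\<^sup>2 + 2 * Re (u x * cnj (w x))" for x
    unfolding w_def cmod_power2 by (simp add: power2_eq_square algebra_simps)
  have iu: "integrable I01 (\<lambda>x. (norm (u x))\<^sup>2)" using L2_sq[OF u] .
  have iw: "integrable I01 (\<lambda>x. (norm (w x))\<^sup>2)" using L2_sq[OF w] .
  have iuw: "integrable I01 (\<lambda>x. u x * cnj (w x))" using L2_inner_integrable[OF u w] .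
  have re0: "(LINT x|I01. Re (u x * cnj (w x))) = 0"
    using integral_Re[OF iuw] o by (simp add: L2_inner_def w_def)
  have "(LINT x|I01. (norm (g x))\<^sup>2) = (LINT x|I01. (norm (u x))\<^sup>2 + (norm (w x))\<^sup>2 + 2 * Re (u x * cnj (w x)))"
    using pt by simp
  also have "\<dots> = (LINT x|I01. (norm (u x))\<^sup>2 + (norm (w x))\<^sup>2) + (LINT x|I01. 2 * Re (u x * cnj (w x)))"
  proof -
    have ir2: "integrable I01 (\<lambda>x. 2 * Re (u x * cnj (w x)))"
      by (rule integrable_mult_right) (rule integrable_Re[OF iuw])
    show ?thesis by (rule Bochner_Integration.integral_add[OF Bochner_Integration.integrable_add[OF iu iw] ir2])
  qed
  also have "(LINT x|I01. (norm (u x))\<^sup>2 + (norm (w x))\<^sup>2) = (LINT x|I01. (norm (u x))\<^sup>2) + (LINT x|I01. (norm (w x))\<^sup>2)"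
    by (rule Bochner_Integration.integral_add) (use iu iw in auto)
  also have "(LINT x|I01. 2 * Re (u x * cnj (w x))) = 2 * (LINT x|I01. Re (u x * cnj (w x)))"
    by (rule integral_mult_right_zero)
  also have "(LINT x|I01. (norm (u x))\<^sup>2) + (LINT x|I01. (norm (w x))\<^sup>2) + 2 * (LINT x|I01. Re (u x * cnj (w x))) = (LINT x|I01. (norm (u x))\<^sup>2) + (LINT x|I01. (norm (w x))\<^sup>2)" by (simp only: re0 mult_zero_right add_0_right)
  finally have e: "(LINT x|I01. (norm (g x))\<^sup>2) = (LINT x|I01. (norm (u x))\<^sup>2) + (LINT x|I01. (norm (w x))\<^sup>2)" .
  have "0 \<le> (LINT x|I01. (norm (w x))\<^sup>2)" by (rule integral_nonneg_AE) simp
  with e show ?thesis unfolding L2_norm_def by (intro real_sqrt_le_mono) linarith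
qed

context
  fixes \<phi> :: "real \<Rightarrow> real"
  assumes mp: "meas_pres \<phi>"
begin

lemma perp_L2: "g \<in> koopman_perp \<phi> \<Longrightarrow> L2 g" by (simp add: koopman_perp_def)

lemma perp_lin:
  assumes "g1 \<in> koopman_perp \<phi>" "g2 \<in> koopman_perp \<phi>"
  shows "(\<lambda>x. a * g1 x + b * g2 x) \<in> koopman_perp \<phi>"
  using assms L2_lin inner_lin2 L2_comp[OF mp]
  unfolding koopman_perp_def by simp

lemma perp_ae:
  assumes g: "g \<in> koopman_perp \<phi>" and g': "L2 g'" and e: "ae_eq g g'"
  shows "g' \<in> koopman_perp \<phi>"
  unfolding koopman_perp_def
proof (intro CollectI conjI allI impI)
  show "L2 g'" by fact
  fix f assume f: "L2 f"
  have fp: "L2 (f \<circ> \<phi>)" using L2_comp[OF mp f] .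
  have "L2_inner (f \<circ> \<phi>) g' = L2_inner (f \<circ> \<phi>) g"
    unfolding L2_inner_def
  proof (rule integral_cong_AE)
    show "(\<lambda>x. (f \<circ> \<phi>) x * cnj (g' x)) \<in> borel_measurable I01"
      using L2_meas[OF fp] L2_meas[OF g'] by measurable
    show "(\<lambda>x. (f \<circ> \<phi>) x * cnj (g x)) \<in> borel_measurable I01"
      using L2_meas[OF fp] L2_meas[OF perp_L2[OF g]] by measurable
    show "AE x in I01. (f \<circ> \<phi>) x * cnj (g' x) = (f \<circ> \<phi>) x * cnj (g x)"
      using e unfolding ae_eq_def by (auto elim: AE_mp)
  qed
  also have "\<dots> = 0" using g f unfolding koopman_perp_def by auto
  finally show "L2_inner (f \<circ> \<phi>) g' = 0" .
qed

lemma perp_zero_unique: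
  assumes u: "L2 u" and p: "(u \<circ> \<phi>) \<in> koopman_perp \<phi>"
  shows "ae_eq u (\<lambda>x. 0)"
proof -
  have "L2_inner (u \<circ> \<phi>) (u \<circ> \<phi>) = 0" using p u unfolding koopman_perp_def by auto
  then have z: "(LINT x|I01. (norm ((u \<circ> \<phi>) x))\<^sup>2) = 0" by (simp add: inner_self)
  have "AE x in I01. (norm ((u \<circ> \<phi>) x))\<^sup>2 = 0"
    using integral_nonneg_eq_0_iff_AE[OF L2_sq[OF L2_comp[OF mp u]]] z by simp
  then have h: "ae_eq (u \<circ> \<phi>) ((\<lambda>x. 0) \<circ> \<phi>)" unfolding ae_eq_def by (simp add: comp_def)
  have m0: "(\<lambda>x. 0::complex) \<in> borel_measurable I01" by simp
  have "ae_eq (u \<circ> \<phi>) ((\<lambda>x. 0) \<circ> \<phi>) = ae_eq u (\<lambda>x. 0)" by (rule ae_comp[OF mp L2_meas[OF u] m0])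
  with h show ?thesis by blast
qed

end



lemma re_sq_le: "(Re z)\<^sup>2 \<le> (cmod z)\<^sup>2" by (simp add: cmod_power2)
lemma im_sq_le: "(Im z)\<^sup>2 \<le> (cmod z)\<^sup>2" by (simp add: cmod_power2)

lemma prod_bnd: fixes x y A B :: real shows "\<bar>x\<bar> \<le> A \<Longrightarrow> \<bar>y\<bar> \<le> B \<Longrightarrow> \<bar>x*y\<bar> \<le> A*B"
  by (simp add: abs_mult mult_mono)

lemma exists_proj:
  assumes mp: "meas_pres \<phi>" and g: "L2 g"
  shows "\<exists>h. L2 h \<and> (\<lambda>x. g x - h (\<phi> x)) \<in> koopman_perp \<phi>"
proof -
  define F where "F = vimage_algebra (space I01) \<phi> I01"
  have phi_fun: "\<phi> \<in> space I01 \<rightarrow> space I01" using measurable_space[OF mp_meas[OF mp]] by auto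
  have sub: "subalgebra I01 F" unfolding subalgebra_def F_def
    using sets_image_in_sets[OF refl mp_meas[OF mp]] by simp
  interpret fms: finite_measure_subalgebra I01 F
    using fin_I01 sub by (simp add: finite_measure_subalgebra_def finite_measure_subalgebra_axioms_def)
  have phiF: "\<phi> \<in> measurable F I01" unfolding F_def by (rule measurable_vimage_algebra1[OF phi_fun])
  have comp: "\<exists>hv \<in> borel_measurable I01. (\<forall>x\<in>space I01. real_cond_exp I01 F v x = hv (\<phi> x))
        \<and> integrable I01 (\<lambda>x. (real_cond_exp I01 F v x)\<^sup>2)"
    if iv: "integrable I01 v" and iv2: "integrable I01 (\<lambda>x. (v x)\<^sup>2)" for v
  proof -
    have "real_cond_exp I01 F v \<in> borel_measurable (vimage_algebra (space I01) \<phi> I01)"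
      unfolding F_def by (rule borel_measurable_cond_exp)
    from doob_dynkin[OF phi_fun this] obtain hv where
      hv: "hv \<in> borel_measurable I01" "\<forall>x\<in>space I01. real_cond_exp I01 F v x = hv (\<phi> x)" by blast
    have "integrable I01 (\<lambda>x. (\<lambda>y. y\<^sup>2) (real_cond_exp I01 F v x))"
      by (rule fms.integrable_convex_cond_exp[where I=UNIV]) (use iv iv2 convex_power2 in auto)
    with hv show ?thesis by auto
  qed
  have gm: "g \<in> borel_measurable I01" using L2_meas[OF g] .
  have ig: "integrable I01 g" using L2_integrable[OF g] .
  have igr2: "integrable I01 (\<lambda>x. (Re (g x))\<^sup>2)"
    by (rule Bochner_Integration.integrable_bound[OF L2_sq[OF g]]) (use gm re_sq_le in auto)
  have igi2: "integrable I01 (\<lambda>x. (Im (g x))\<^sup>2)"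
    by (rule Bochner_Integration.integrable_bound[OF L2_sq[OF g]]) (use gm im_sq_le in auto)
  obtain hr where hr: "hr \<in> borel_measurable I01" "\<forall>x\<in>space I01. real_cond_exp I01 F (\<lambda>x. Re (g x)) x = hr (\<phi> x)"
     "integrable I01 (\<lambda>x. (real_cond_exp I01 F (\<lambda>x. Re (g x)) x)\<^sup>2)"
    using comp[OF integrable_Re[OF ig] igr2] by blast
  obtain hi where hi: "hi \<in> borel_measurable I01" "\<forall>x\<in>space I01. real_cond_exp I01 F (\<lambda>x. Im (g x)) x = hi (\<phi> x)"
     "integrable I01 (\<lambda>x. (real_cond_exp I01 F (\<lambda>x. Im (g x)) x)\<^sup>2)"
    using comp[OF integrable_Im[OF ig] igi2] by blast
  define cr where "cr = real_cond_exp I01 F (\<lambda>x. Re (g x))"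
  define ci where "ci = real_cond_exp I01 F (\<lambda>x. Im (g x))"
  define h where "h = (\<lambda>y. complex_of_real (hr y) + \<i> * complex_of_real (hi y))"
  have hphi: "h (\<phi> x) = complex_of_real (cr x) + \<i> * complex_of_real (ci x)" if "x \<in> space I01" for x
    using hr(2) hi(2) that unfolding h_def cr_def ci_def by simp
  have hm: "h \<in> borel_measurable I01" unfolding h_def using hr(1) hi(1) by measurable
  have L2h: "L2 h" unfolding L2_def
  proof
    show "h \<in> borel_measurable I01" by (rule hm)
    have m: "(\<lambda>y. (norm (h y))\<^sup>2) \<in> borel_measurable I01" using hm by measurable
    have "integrable I01 (\<lambda>x. (cr x)\<^sup>2 + (ci x)\<^sup>2)" using hr(3) hi(3) unfolding cr_def ci_def by simp
    moreover have "integrable I01 (\<lambda>x. (norm (h (\<phi> x)))\<^sup>2) = integrable I01 (\<lambda>x. (cr x)\<^sup>2 + (ci x)\<^sup>2)"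
      by (rule Bochner_Integration.integrable_cong) (auto simp: hphi cmod_power2)
    ultimately show "integrable I01 (\<lambda>y. (norm (h y))\<^sup>2)" using integrable_comp[OF mp m] by simp
  qed
  have key: "integrable I01 (\<lambda>x. c x * (v x - real_cond_exp I01 F v x)) \<and>
             (LINT x|I01. c x * (v x - real_cond_exp I01 F v x)) = 0"
    if cm: "c \<in> borel_measurable F" and vm: "v \<in> borel_measurable I01"
      and icv: "integrable I01 (\<lambda>x. c x * v x)" for c v
  proof -
    have i1: "integrable I01 (\<lambda>x. c x * real_cond_exp I01 F v x)"
      and e1: "(LINT x|I01. c x * real_cond_exp I01 F v x) = (LINT x|I01. c x * v x)"
      using fms.real_cond_exp_intg[OF icv cm vm] by auto
    have eq: "(\<lambda>x. c x * (v x - real_cond_exp I01 F v x)) = (\<lambda>x. c x * v x - c x * real_cond_exp I01 F v x)"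
      by (simp add: algebra_simps)
    show ?thesis unfolding eq using icv i1 e1 by simp
  qed
  show ?thesis
  proof (intro exI conjI)
    show "L2 h" by (rule L2h)
    show "(\<lambda>x. g x - h (\<phi> x)) \<in> koopman_perp \<phi>"
      unfolding koopman_perp_def
    proof (intro CollectI conjI allI impI)
      show "L2 (\<lambda>x. g x - h (\<phi> x))" using L2_diff[OF g L2_comp[OF mp L2h]] by (simp add: comp_def)
      fix f assume f: "L2 f"
      have fpF: "(\<lambda>x. f (\<phi> x)) \<in> borel_measurable F"
        using measurable_compose[OF phiF L2_meas[OF f]] .
      define a where "a = (\<lambda>x. Re (f (\<phi> x)))"
      define b where "b = (\<lambda>x. Im (f (\<phi> x)))"
      have aF: "a \<in> borel_measurable F" unfolding a_def using fpF by measurable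
      have bF: "b \<in> borel_measurable F" unfolding b_def using fpF by measurable
      have fp: "L2 (f \<circ> \<phi>)" by (rule L2_comp[OF mp f])
      have grm: "(\<lambda>x. Re (g x)) \<in> borel_measurable I01" using gm by measurable
      have gim: "(\<lambda>x. Im (g x)) \<in> borel_measurable I01" using gm by measurable
      have fpm: "(\<lambda>x. f (\<phi> x)) \<in> borel_measurable I01" using L2_meas[OF fp] by (simp add: comp_def)
      have am: "a \<in> borel_measurable I01" unfolding a_def using measurable_compose[OF fpm borel_measurable_Re] .
      have bm: "b \<in> borel_measurable I01" unfolding b_def using measurable_compose[OF fpm borel_measurable_Im] .
      have ip: "integrable I01 (\<lambda>x. p x * q x)"
        if "p \<in> borel_measurable I01" "q \<in> borel_measurable I01"
           "\<And>x. \<bar>p x\<bar> \<le> norm ((f \<circ> \<phi>) x)" "\<And>x. \<bar>q x\<bar> \<le> norm (g x)" for p q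
        by (rule bound_prod[OF fp g]) (use that in \<open>auto intro: prod_bnd\<close>)
      have iagr: "integrable I01 (\<lambda>x. a x * Re (g x))"
        by (rule ip[OF am grm]) (auto simp: a_def abs_Re_le_cmod abs_Im_le_cmod)
      have iagi: "integrable I01 (\<lambda>x. a x * Im (g x))"
        by (rule ip[OF am gim]) (auto simp: a_def abs_Re_le_cmod abs_Im_le_cmod)
      have ibgr: "integrable I01 (\<lambda>x. b x * Re (g x))"
        by (rule ip[OF bm grm]) (auto simp: b_def abs_Re_le_cmod abs_Im_le_cmod)
      have ibgi: "integrable I01 (\<lambda>x. b x * Im (g x))"
        by (rule ip[OF bm gim]) (auto simp: b_def abs_Re_le_cmod abs_Im_le_cmod)
      note k1 = key[OF aF grm iagr, folded cr_def]
      note k2 = key[OF bF gim ibgi, folded ci_def]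
      note k3 = key[OF bF grm ibgr, folded cr_def]
      note k4 = key[OF aF gim iagi, folded ci_def]
      define I where "I = (\<lambda>x. (f \<circ> \<phi>) x * cnj (g x - h (\<phi> x)))"
      have iI: "integrable I01 I" unfolding I_def
        using L2_inner_integrable[OF fp L2_diff[OF g L2_comp[OF mp L2h]]] by (simp add: comp_def)
      have reI: "Re (I x) = a x * (Re (g x) - cr x) + b x * (Im (g x) - ci x)" if "x \<in> space I01" for x
        unfolding I_def a_def b_def using hphi[OF that] by (simp add: algebra_simps)
      have imI: "Im (I x) = b x * (Re (g x) - cr x) - a x * (Im (g x) - ci x)" if "x \<in> space I01" for x
        unfolding I_def a_def b_def using hphi[OF that] by (simp add: algebra_simps)
      have "Re (integral\<^sup>L I01 I) = (LINT x|I01. Re (I x))" using integral_Re[OF iI] by simp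
      also have "\<dots> = (LINT x|I01. a x * (Re (g x) - cr x) + b x * (Im (g x) - ci x))"
        by (rule Bochner_Integration.integral_cong) (auto simp: reI)
      also have "\<dots> = 0" using k1 k2 by simp
      finally have r0: "Re (integral\<^sup>L I01 I) = 0" .
      have "Im (integral\<^sup>L I01 I) = (LINT x|I01. Im (I x))" using integral_Im[OF iI] by simp
      also have "\<dots> = (LINT x|I01. b x * (Re (g x) - cr x) - a x * (Im (g x) - ci x))"
        by (rule Bochner_Integration.integral_cong) (auto simp: imI)
      also have "\<dots> = 0" using k3 k4 by simp
      finally have i0: "Im (integral\<^sup>L I01 I) = 0" .
      show "L2_inner (f \<circ> \<phi>) (\<lambda>x. g x - h (\<phi> x)) = 0"
        using r0 i0 unfolding L2_inner_def I_def by (simp add: complex_eq_iff)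
    qed
  qed
qed



lemma ae_eq_trans: "ae_eq f g \<Longrightarrow> ae_eq g k \<Longrightarrow> ae_eq f k"
  unfolding ae_eq_def by (auto elim: AE_mp)
lemma ae_eq_sym: "ae_eq f g \<Longrightarrow> ae_eq g f"
  unfolding ae_eq_def by (auto elim: AE_mp)

lemma L2_norm_nonneg: "0 \<le> L2_norm f"
  unfolding L2_norm_def by (simp add: integral_nonneg_AE)

context
  fixes \<phi> :: "real \<Rightarrow> real"
  assumes mp: "meas_pres \<phi>"
begin

lemma Hchar:
  assumes h: "L2 h" and h': "L2 h'"
    and p: "(\<lambda>x. g x - h (\<phi> x)) \<in> koopman_perp \<phi>" and p': "(\<lambda>x. g x - h' (\<phi> x)) \<in> koopman_perp \<phi>"
  shows "ae_eq h h'"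
proof -
  have "(\<lambda>x. 1 * (g x - h (\<phi> x)) + (-1) * (g x - h' (\<phi> x))) \<in> koopman_perp \<phi>"
    by (rule perp_lin[OF mp p p'])
  moreover have "(\<lambda>x. 1 * (g x - h (\<phi> x)) + (-1) * (g x - h' (\<phi> x))) = (\<lambda>y. h' y - h y) \<circ> \<phi>"
    by (auto simp: comp_def algebra_simps)
  ultimately have "((\<lambda>y. h' y - h y) \<circ> \<phi>) \<in> koopman_perp \<phi>" by simp
  from perp_zero_unique[OF mp L2_diff[OF h' h] this]
  show ?thesis unfolding ae_eq_def by (auto elim: AE_mp)
qed

end

theorem lemma2p6:
  fixes \<phi> :: "real \<Rightarrow> real"
    and B :: "(real \<Rightarrow> complex) \<Rightarrow> (real \<Rightarrow> complex)"
  assumes "meas_pres \<phi>"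
    and "bounded_op B"
  shows "\<exists>B'. lifted_op \<phi> B B' \<and>
           (\<forall>B''. lifted_op \<phi> B B'' \<longrightarrow> (\<forall>f. L2 f \<longrightarrow> ae_eq (B'' f) (B' f)))"
proof -
  note mp = assms(1)
  have BL2: "\<And>f. L2 f \<Longrightarrow> L2 (B f)"
    and Bwd: "\<And>f g. L2 f \<Longrightarrow> L2 g \<Longrightarrow> ae_eq f g \<Longrightarrow> ae_eq (B f) (B g)"
    and Blin: "\<And>f g a b. L2 f \<Longrightarrow> L2 g \<Longrightarrow> ae_eq (B (\<lambda>x. a * f x + b * g x)) (\<lambda>x. a * B f x + b * B g x)"
    using assms(2) unfolding bounded_op_def by blast+
  obtain C where C: "\<And>f. L2 f \<Longrightarrow> L2_norm (B f) \<le> C * L2_norm f"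
    using assms(2) unfolding bounded_op_def by blast
  define H where "H g = (SOME h. L2 h \<and> (\<lambda>x. g x - h (\<phi> x)) \<in> koopman_perp \<phi>)" for g
  have H: "L2 (H g) \<and> (\<lambda>x. g x - H g (\<phi> x)) \<in> koopman_perp \<phi>" if "L2 g" for g
    unfolding H_def by (rule someI_ex[OF exists_proj[OF mp that]])
  have HL2: "L2 g \<Longrightarrow> L2 (H g)" for g using H by blast
  have Hp: "L2 g \<Longrightarrow> (\<lambda>x. g x - H g (\<phi> x)) \<in> koopman_perp \<phi>" for g using H by blast
  have Hc: "ae_eq (H g) h" if "L2 g" "L2 h" "(\<lambda>x. g x - h (\<phi> x)) \<in> koopman_perp \<phi>" for g h
    by (rule Hchar[OF mp HL2[OF that(1)] that(2) Hp[OF that(1)] that(3)])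
  have aec: "ae_eq (u \<circ> \<phi>) (v \<circ> \<phi>)" if "L2 u" "L2 v" "ae_eq u v" for u v
    using ae_comp[OF mp L2_meas[OF that(1)] L2_meas[OF that(2)]] that(3) by simp
  have B0: "ae_eq (B (\<lambda>x. 0)) (\<lambda>x. 0)"
    using Blin[OF L2_zero L2_zero, of 0 0] by simp
  define B' where "B' g = B (H g) \<circ> \<phi>" for g
  have lif: "lifted_op \<phi> B B'"
    unfolding lifted_op_def bounded_op_def
  proof (intro conjI allI impI ballI)
    fix f assume f: "L2 f"
    show "L2 (B' f)" unfolding B'_def by (rule L2_comp[OF mp BL2[OF HL2[OF f]]])
  next
    fix f g assume f: "L2 f" and g: "L2 g" and fg: "ae_eq f g"
    have L2g': "L2 (\<lambda>x. f x - H g (\<phi> x))"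
      using L2_diff[OF f L2_comp[OF mp HL2[OF g]]] by (simp add: comp_def)
    have "ae_eq (\<lambda>x. g x - H g (\<phi> x)) (\<lambda>x. f x - H g (\<phi> x))"
      using fg unfolding ae_eq_def by (auto elim: AE_mp)
    from perp_ae[OF mp Hp[OF g] L2g' this]
    have "ae_eq (H f) (H g)" by (rule Hc[OF f HL2[OF g]])
    then have "ae_eq (B (H f)) (B (H g))" by (rule Bwd[OF HL2[OF f] HL2[OF g]])
    then show "ae_eq (B' f) (B' g)" unfolding B'_def
      by (rule aec[OF BL2[OF HL2[OF f]] BL2[OF HL2[OF g]]])
  next
    fix f g :: "real \<Rightarrow> complex" and a b :: complex
    assume f: "L2 f" and g: "L2 g"
    define s where "s = (\<lambda>x. a * f x + b * g x)"
    define h where "h = (\<lambda>y. a * H f y + b * H g y)"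
    have Ls: "L2 s" unfolding s_def by (rule L2_lin[OF f g])
    have Lh: "L2 h" unfolding h_def by (rule L2_lin[OF HL2[OF f] HL2[OF g]])
    have "(\<lambda>x. a * (f x - H f (\<phi> x)) + b * (g x - H g (\<phi> x))) \<in> koopman_perp \<phi>"
      by (rule perp_lin[OF mp Hp[OF f] Hp[OF g]])
    moreover have "(\<lambda>x. a * (f x - H f (\<phi> x)) + b * (g x - H g (\<phi> x))) = (\<lambda>x. s x - h (\<phi> x))"
      unfolding s_def h_def by (auto simp: algebra_simps)
    ultimately have "ae_eq (H s) h" using Hc[OF Ls Lh] by simp
    then have "ae_eq (B (H s)) (B h)" by (rule Bwd[OF HL2[OF Ls] Lh])
    then have e: "ae_eq (B (H s)) (\<lambda>x. a * B (H f) x + b * B (H g) x)"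
      using Blin[OF HL2[OF f] HL2[OF g], of a b] unfolding h_def by (rule ae_eq_trans)
    have L2r: "L2 (\<lambda>x. a * B (H f) x + b * B (H g) x)"
      by (rule L2_lin[OF BL2[OF HL2[OF f]] BL2[OF HL2[OF g]]])
    from aec[OF BL2[OF HL2[OF Ls]] L2r e]
    show "ae_eq (B' (\<lambda>x. a * f x + b * g x)) (\<lambda>x. a * B' f x + b * B' g x)"
      unfolding B'_def s_def by (simp add: comp_def)
  next
    show "\<exists>C. \<forall>f. L2 f \<longrightarrow> L2_norm (B' f) \<le> C * L2_norm f"
    proof (intro exI allI impI)
      fix f assume f: "L2 f"
      have "L2_inner (H f \<circ> \<phi>) (\<lambda>x. f x - (H f \<circ> \<phi>) x) = 0"
        using Hp[OF f] HL2[OF f] unfolding koopman_perp_def by (simp add: comp_def)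
      from pyth[OF f L2_comp[OF mp HL2[OF f]] this]
      have n1: "L2_norm (H f) \<le> L2_norm f" using L2_norm_comp[OF mp HL2[OF f]] by simp
      have "L2_norm (B' f) = L2_norm (B (H f))" unfolding B'_def by (rule L2_norm_comp[OF mp BL2[OF HL2[OF f]]])
      also have "\<dots> \<le> C * L2_norm (H f)" by (rule C[OF HL2[OF f]])
      also have "\<dots> \<le> max C 0 * L2_norm (H f)" by (rule mult_right_mono) (auto simp: L2_norm_nonneg)
      also have "\<dots> \<le> max C 0 * L2_norm f" by (rule mult_left_mono[OF n1]) simp
      finally show "L2_norm (B' f) \<le> max C 0 * L2_norm f" .
    qed
  next
    fix f assume f: "L2 f"
    have fp: "L2 (f \<circ> \<phi>)" by (rule L2_comp[OF mp f])
    have "(\<lambda>x. (f \<circ> \<phi>) x - f (\<phi> x)) = (\<lambda>x. 0)" by simp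
    moreover have "(\<lambda>x. 0) \<in> koopman_perp \<phi>" unfolding koopman_perp_def L2_inner_def by (simp add: L2_zero)
    ultimately have "ae_eq (H (f \<circ> \<phi>)) f" using Hc[OF fp f] by simp
    then have "ae_eq (B (H (f \<circ> \<phi>))) (B f)" by (rule Bwd[OF HL2[OF fp] f])
    then show "ae_eq (B' (f \<circ> \<phi>)) (B f \<circ> \<phi>)" unfolding B'_def
      by (rule aec[OF BL2[OF HL2[OF fp]] BL2[OF f]])
  next
    fix g assume g: "g \<in> koopman_perp \<phi>"
    have Lg: "L2 g" by (rule perp_L2[OF mp g])
    have "ae_eq (H g) (\<lambda>y. 0)" using Hc[OF Lg L2_zero] g by simp
    then have "ae_eq (B (H g)) (B (\<lambda>y. 0))" by (rule Bwd[OF HL2[OF Lg] L2_zero])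
    then have "ae_eq (B (H g)) (\<lambda>y. 0)" using B0 by (rule ae_eq_trans)
    from aec[OF BL2[OF HL2[OF Lg]] L2_zero this]
    show "ae_eq (B' g) (\<lambda>x. 0)" unfolding B'_def by (simp add: comp_def)
  qed
  show ?thesis
  proof (intro exI conjI allI impI)
    show "lifted_op \<phi> B B'" by (rule lif)
    fix B'' f assume l: "lifted_op \<phi> B B''" and f: "L2 f"
    have B''lin: "\<And>f g a b. L2 f \<Longrightarrow> L2 g \<Longrightarrow> ae_eq (B'' (\<lambda>x. a * f x + b * g x)) (\<lambda>x. a * B'' f x + b * B'' g x)"
      and B''c: "\<And>f. L2 f \<Longrightarrow> ae_eq (B'' (f \<circ> \<phi>)) (B f \<circ> \<phi>)"
      and B''p: "\<And>g. g \<in> koopman_perp \<phi> \<Longrightarrow> ae_eq (B'' g) (\<lambda>x. 0)"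
      using l unfolding lifted_op_def bounded_op_def by blast+
    define u where "u = (\<lambda>x. f x - H f (\<phi> x))"
    have up: "u \<in> koopman_perp \<phi>" unfolding u_def by (rule Hp[OF f])
    have hp: "L2 (H f \<circ> \<phi>)" by (rule L2_comp[OF mp HL2[OF f]])
    have feq: "(\<lambda>x. 1 * (H f \<circ> \<phi>) x + 1 * u x) = f" unfolding u_def by auto
    have e1: "ae_eq (B'' f) (\<lambda>x. 1 * B'' (H f \<circ> \<phi>) x + 1 * B'' u x)"
      using B''lin[OF hp perp_L2[OF mp up], of 1 1] unfolding feq .
    have e2: "ae_eq (B'' (H f \<circ> \<phi>)) (B' f)" unfolding B'_def by (rule B''c[OF HL2[OF f]])
    have e3: "ae_eq (B'' u) (\<lambda>x. 0)" by (rule B''p[OF up])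
    show "ae_eq (B'' f) (B' f)"
      using e1 e2 e3 unfolding ae_eq_def by eventually_elim simp
  qed
qed


end
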